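(* Let $U$ be a solution curve of the normalized two-dimensional capillarity equation, i.e. a $C^2$ function $U(\xi)$ on an open interval with inclination angle $\psi=\arctan U_\xi\in(-\pi/2,\pi/2)$, satisfying $(\sin\psi)_\xi=U$, $U_\xi=\tan\psi$, and let $c$ be the constant with $\tfrac12U^2+\cos\psi\equiv c$ along the curve. Suppose $c>1$ and set $\delta=c-1$. Then: (i) the length $l$ of any $\xi$-interval over which the solution curve (as a graph with $-\pi/2<\psi<\pi/2$) can extend satisfies $l<\sqrt{2/\delta}$; (ii) any such solution curve that is positive at some point can be extended (as a graph, with $-\pi/2<\psi<\pi/2$) across a unique point at which it attains a positive minimum value $U_0$; (iii) if each such positive solution curve (with $c>1$), maximally extended as a graph over the parameter interval $-\pi/2<\psi<\pi/2$, is translated horizontally so that its minimum point lies at $\xi=0$, then the set of all these normalized curves simply covers a domain $\mathcal{D}^+$ (the union of their graphs), i.e. each point of $\mathcal{D}^+$ lies on exactly one of the normalized curves.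
   Context: The capillarity equation in one variable, in non-dimensional coordinates $\xi=\sqrt{\kappa}x$, $U=\sqrt{\kappa}u$ ($\kappa>0$ the capillarity constant), reads $(\sin\psi)_\xi=U$, $U_\xi=\tan\psi$, where $\psi$ is the inclination angle of the graph $U(\xi)$. Every solution satisfies the first integral $\tfrac12U^2+\cos\psi=c$ for a constant $c$. "Solution curve" here means a graph $U(\xi)$ solving this system with $-\pi/2<\psi<\pi/2$. *)

theory Defs
  imports "HOL-Analysis.Analysis"
begin

definition incl :: "(real \<Rightarrow> real) \<Rightarrow> real \<Rightarrow> real" where
  "incl U x = arctan (deriv U x)"

text \<open>U is a solution curve of the normalized capillarity equation
  (sin psi)' = U, U' = tan psi on the nonempty open interval I,
  with -pi/2 < psi < pi/2 (automatic since psi = arctan U'),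
  and U is C^2 on I.\<close>
definition cap_sol :: "(real \<Rightarrow> real) \<Rightarrow> real set \<Rightarrow> bool" where
  "cap_sol U I \<longleftrightarrow> is_interval I \<and> open I \<and> I \<noteq> {} \<and>
     (\<forall>x\<in>I. (U has_real_derivative tan (incl U x)) (at x)) \<and>
     (\<forall>x\<in>I. ((\<lambda>t. sin (incl U t)) has_real_derivative U x) (at x)) \<and>
     (\<forall>x\<in>I. deriv U differentiable (at x)) \<and>
     continuous_on I (deriv (deriv U))"

definition cap_energy :: "(real \<Rightarrow> real) \<Rightarrow> real set \<Rightarrow> real \<Rightarrow> bool" where
  "cap_energy U I c \<longleftrightarrow> (\<forall>x\<in>I. (U x)\<^sup>2 / 2 + cos (incl U x) = c)"

definition cap_ext :: "(real \<Rightarrow> real) \<Rightarrow> real set \<Rightarrow> (real \<Rightarrow> real) \<Rightarrow> real set \<Rightarrow> bool" where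
  "cap_ext U I V J \<longleftrightarrow> cap_sol V J \<and> I \<subseteq> J \<and> (\<forall>x\<in>I. V x = U x)"

definition cap_maximal :: "(real \<Rightarrow> real) \<Rightarrow> real set \<Rightarrow> bool" where
  "cap_maximal U I \<longleftrightarrow> cap_sol U I \<and> (\<forall>W K. cap_ext U I W K \<longrightarrow> K = I)"

definition graph_on :: "(real \<Rightarrow> real) \<Rightarrow> real set \<Rightarrow> (real \<times> real) set" where
  "graph_on U I = {(x, U x) | x. x \<in> I}"

definition normalized_curves :: "(real \<times> real) set set" where
  "normalized_curves = {graph_on V J | V J. \<exists>c. c > 1 \<and> cap_maximal V J \<and>
      cap_energy V J c \<and> (\<forall>x\<in>J. V x > 0) \<and> 0 \<in> J \<and> (\<forall>x\<in>J. V 0 \<le> V x)}"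

definition D_plus :: "(real \<times> real) set" where
  "D_plus = \<Union> normalized_curves"

end

theory Submission
  imports Defs
begin


definition ff :: "real \<Rightarrow> real \<Rightarrow> real" where
  "ff c t = cos t / sqrt (2 * (c - cos t))"

definition XX :: "real \<Rightarrow> real \<Rightarrow> real" where
  "XX c p = integral {-2..p} (ff c)"

definition PP :: "real \<Rightarrow> real \<Rightarrow> real" where
  "PP c z = (THE p. - (pi/2) < p \<and> p < pi/2 \<and> XX c p = z)"

lemma cpos: "(c::real) > 1 \<Longrightarrow> c - cos t > 0"
  using cos_le_one[of t] by linarith

lemma ff_cont: "c > 1 \<Longrightarrow> continuous_on S (ff c)"
  unfolding ff_def
  by (intro continuous_intros) (use cpos in force)+

lemma ff_pos: "c > 1 \<Longrightarrow> - (pi/2) < t \<Longrightarrow> t < pi/2 \<Longrightarrow> ff c t > 0"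
  unfolding ff_def using cpos[of c t] cos_gt_zero_pi[of t] by auto

lemma ff_nonneg: "c > 1 \<Longrightarrow> - (pi/2) \<le> t \<Longrightarrow> t \<le> pi/2 \<Longrightarrow> ff c t \<ge> 0"
  unfolding ff_def using cpos[of c t] cos_ge_zero[of t] by auto

lemma XX_deriv: assumes "c > 1" "p > -2" shows "(XX c has_real_derivative ff c p) (at p)"
proof -
  have "((\<lambda>x. integral {-2..x} (ff c)) has_real_derivative ff c p) (at p within {-2..p+1})"
    by (rule integral_has_real_derivative) (use assms ff_cont in auto)
  moreover have "at p within {-2..p+1} = at p"
    by (rule at_within_interior) (use assms in auto)
  ultimately show ?thesis unfolding XX_def by simp
qed

lemma pi_half_gt: "- (pi/2) > -2" using pi_less_4 by linarith

lemma XX_cont: "c > 1 \<Longrightarrow> p > -2 \<Longrightarrow> isCont (XX c) p"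
  using XX_deriv DERIV_isCont by blast

lemma XX_mono: assumes "c > 1" "- (pi/2) \<le> p" "p < q" "q \<le> pi/2" shows "XX c p < XX c q"
proof (rule DERIV_pos_imp_increasing_open[of p q "XX c"])
  show "p < q" by fact
  fix x assume "p < x" "x < q"
  then show "\<exists>y. DERIV (XX c) x :> y \<and> 0 < y"
  proof (intro exI conjI)
    show "DERIV (XX c) x :> ff c x" using assms \<open>p < x\<close> pi_half_gt by (intro XX_deriv) auto
    show "0 < ff c x" using assms \<open>p < x\<close> \<open>x < q\<close> by (intro ff_pos) auto
  qed
next
  show "continuous_on {p..q} (XX c)"
    using assms pi_half_gt by (intro continuous_at_imp_continuous_on ballI XX_cont) auto
qed

lemma XX_mono_le: assumes "c > 1" "- (pi/2) \<le> p" "p \<le> q" "q \<le> pi/2" shows "XX c p \<le> XX c q"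
  using XX_mono[of c p q] assms by (cases "p = q") auto

lemma PP_ex: assumes "c > 1" "XX c (-(pi/2)) < z" "z < XX c (pi/2)"
  shows "- (pi/2) < PP c z \<and> PP c z < pi/2 \<and> XX c (PP c z) = z"
proof -
  have "\<exists>x. -(pi/2) \<le> x \<and> x \<le> pi/2 \<and> XX c x = z"
    apply (rule IVT') using assms pi_half_gt
    by (auto intro!: continuous_at_imp_continuous_on XX_cont)
  then obtain p where p: "-(pi/2) \<le> p" "p \<le> pi/2" "XX c p = z" by blast
  have p2: "- (pi/2) < p" "p < pi/2"
  proof -
    show "- (pi/2) < p" proof (rule ccontr) assume "\<not> - (pi/2) < p"
      then have "p = -(pi/2)" using p by linarith
      then show False using p assms by (metis less_irrefl) qed
    show "p < pi/2" proof (rule ccontr) assume "\<not> p < pi/2"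
      then have "p = pi/2" using p by linarith
      then show False using p assms by (metis less_irrefl) qed
  qed
  have "PP c z = p" unfolding PP_def
  proof (rule the_equality)
    show "- (pi / 2) < p \<and> p < pi / 2 \<and> XX c p = z" using p p2 by auto
    fix q assume q: "- (pi / 2) < q \<and> q < pi / 2 \<and> XX c q = z"
    show "q = p"
    proof (rule ccontr)
      assume "q \<noteq> p"
      then consider "q < p" | "p < q" by linarith
      then show False using XX_mono[of c q p] XX_mono[of c p q] q p p2 assms by (cases; force)
    qed
  qed
  then show ?thesis using p p2 by auto
qed

lemma PP_XX: assumes "c > 1" "- (pi/2) < p" "p < pi/2" shows "PP c (XX c p) = p"
  and "XX c (-(pi/2)) < XX c p" "XX c p < XX c (pi/2)"
proof -
  show a: "XX c (-(pi/2)) < XX c p" "XX c p < XX c (pi/2)" using XX_mono assms by auto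
  obtain q where "q = PP c (XX c p)" by auto
  have q: "- (pi/2) < q" "q < pi/2" "XX c q = XX c p" using PP_ex[OF assms(1) a] by (auto simp: \<open>q = _\<close>)
  show "PP c (XX c p) = p"
  proof (rule ccontr)
    assume "PP c (XX c p) \<noteq> p"
    then consider "q < p" | "p < q" using \<open>q = _\<close> by linarith
    then show False using XX_mono[of c q p] XX_mono[of c p q] q assms by (cases; force)
  qed
qed



abbreviation "AA c \<equiv> XX c (-(pi/2))"
abbreviation "BB c \<equiv> XX c (pi/2)"

lemma PP_cont: assumes "c > 1" "AA c < z" "z < BB c" shows "isCont (PP c) z"
proof -
  define p where "p = PP c z"
  have p: "- (pi/2) < p" "p < pi/2" "XX c p = z" using PP_ex[OF assms] p_def by auto
  have "isCont (PP c) (XX c p)"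
  proof (rule isCont_inverse_function2[where f="XX c" and g="PP c" and x=p and a="(-(pi/2) + p)/2" and b = "(p + pi/2)/2"])
    show "(-(pi/2) + p)/2 < p" "p < (p + pi/2)/2" using p by auto
    fix w assume w: "(-(pi/2) + p)/2 \<le> w" "w \<le> (p + pi/2)/2"
    show "PP c (XX c w) = w" using w p by (intro PP_XX assms) auto
    show "isCont (XX c) w" using w p pi_half_gt assms by (intro XX_cont) auto
  qed
  then show ?thesis using p by simp
qed

lemma PP_deriv: assumes "c > 1" "AA c < z" "z < BB c"
  shows "DERIV (PP c) z :> inverse (ff c (PP c z))"
proof (rule DERIV_inverse_function[where f="XX c" and a="AA c" and b="BB c"])
  have p: "- (pi/2) < PP c z" "PP c z < pi/2" "XX c (PP c z) = z" using PP_ex[OF assms] by auto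
  show "DERIV (XX c) (PP c z) :> ff c (PP c z)" using p pi_half_gt assms by (intro XX_deriv) auto
  show "ff c (PP c z) \<noteq> 0" using ff_pos p assms by force
  show "AA c < z" "z < BB c" by fact+
  fix y assume "AA c < y" "y < BB c" then show "XX c (PP c y) = y" using PP_ex assms by blast
next
  show "isCont (PP c) z" using PP_cont assms .
qed

definition WW :: "real \<Rightarrow> real \<Rightarrow> real \<Rightarrow> real" where
  "WW c a x = sqrt (2 * (c - cos (PP c (x + a))))"

definition JJ :: "real \<Rightarrow> real \<Rightarrow> real set" where
  "JJ c a = {AA c - a <..< BB c - a}"

lemma th_props: assumes "c > 1" "x \<in> JJ c a"
  shows "- (pi/2) < PP c (x + a)" "PP c (x + a) < pi/2" "XX c (PP c (x + a)) = x + a"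
  using PP_ex[OF assms(1), of "x + a"] assms(2) by (auto simp: JJ_def)

lemma th_deriv: assumes "c > 1" "x \<in> JJ c a"
  shows "DERIV (\<lambda>x. PP c (x + a)) x :> inverse (ff c (PP c (x + a)))"
proof -
  have "DERIV (\<lambda>x. PP c (x + a)) x :> inverse (ff c (PP c (x + a))) * 1"
    by (rule DERIV_chain2[where f="PP c" and g="\<lambda>x. x + a"])
       (use assms in \<open>auto simp: JJ_def intro!: PP_deriv derivative_eq_intros\<close>)
  then show ?thesis by simp
qed

lemma WW_deriv: assumes "c > 1" "x \<in> JJ c a"
  shows "DERIV (WW c a) x :> tan (PP c (x + a))"
proof -
  define th where "th = PP c (x + a)"
  have th: "- (pi/2) < th" "th < pi/2" using th_props[OF assms] th_def by auto
  have cth: "cos th > 0" using th cos_gt_zero_pi by auto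
  have pos: "2 * (c - cos th) > 0" using cpos[OF assms(1)] by simp
  define w where "w = sqrt (2 * (c - cos th))"
  have wpos: "w > 0" using pos w_def by simp
  have d1: "DERIV (\<lambda>x. 2 * (c - cos (PP c (x + a)))) x :> 2 * (0 - (- sin th * inverse (ff c th)))"
  proof -
    have "DERIV (\<lambda>x. cos (PP c (x + a))) x :> - sin th * inverse (ff c th)"
      using DERIV_chain2[OF DERIV_cos th_deriv[OF assms]] th_def by simp
    then have "DERIV (\<lambda>x. c - cos (PP c (x + a))) x :> 0 - (- sin th * inverse (ff c th))"
      by (intro DERIV_diff) auto
    then show ?thesis by (intro DERIV_cmult)
  qed
  have "DERIV (WW c a) x :> inverse (sqrt (2 * (c - cos th))) / 2 * (2 * (0 - (- sin th * inverse (ff c th))))"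
    unfolding WW_def th_def
    by (rule DERIV_chain2[OF DERIV_real_sqrt d1[unfolded th_def]]) (use pos th_def in simp)
  moreover have "inverse (sqrt (2 * (c - cos th))) / 2 * (2 * (0 - (- sin th * inverse (ff c th)))) = tan th"
    using wpos cth unfolding w_def[symmetric] ff_def tan_def by (simp add: field_simps w_def)
  ultimately show ?thesis unfolding th_def by simp
qed



lemma JJ_open: "open (JJ c a)" by (simp add: JJ_def)

lemma incl_WW: assumes "c > 1" "x \<in> JJ c a" shows "incl (WW c a) x = PP c (x + a)"
  unfolding incl_def using DERIV_imp_deriv[OF WW_deriv[OF assms]] th_props[OF assms]
  by (simp add: arctan_tan)

lemma deriv_WW: assumes "c > 1" "x \<in> JJ c a" shows "deriv (WW c a) x = tan (PP c (x + a))"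
  using DERIV_imp_deriv[OF WW_deriv[OF assms]] .

lemma WW_energy: assumes "c > 1" shows "cap_energy (WW c a) (JJ c a) c"
  unfolding cap_energy_def
proof
  fix x assume x: "x \<in> JJ c a"
  have "(WW c a x)\<^sup>2 = 2 * (c - cos (PP c (x + a)))"
    unfolding WW_def using cpos[OF assms, of "PP c (x + a)"] by simp
  then show "(WW c a x)\<^sup>2 / 2 + cos (incl (WW c a) x) = c" using incl_WW[OF assms x] by (simp add: diff_divide_distrib)
qed

lemma WW_sol: assumes "c > 1" shows "cap_sol (WW c a) (JJ c a)"
  unfolding cap_sol_def
proof (intro conjI ballI)
  show "is_interval (JJ c a)" by (simp add: JJ_def is_interval_convex_1)
  show "open (JJ c a)" by (rule JJ_open)
  have "AA c < BB c" using XX_mono[OF assms, of "-(pi/2)" "pi/2"] by simp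
  then show "JJ c a \<noteq> {}" by (auto simp: JJ_def)
  fix x assume x: "x \<in> JJ c a"
  define th where "th = PP c (x + a)"
  have th: "- (pi/2) < th" "th < pi/2" using th_props[OF assms x] th_def by auto
  have cth: "cos th > 0" using th cos_gt_zero_pi by auto
  show "DERIV (WW c a) x :> tan (incl (WW c a) x)"
    using WW_deriv[OF assms x] incl_WW[OF assms x] by simp
  have ws: "WW c a x = sqrt (2 * (c - cos th))" unfolding WW_def th_def ..
  have wpos: "sqrt (2 * (c - cos th)) > 0" using cpos[OF assms] by simp
  have "DERIV (\<lambda>t. sin (PP c (t + a))) x :> cos th * inverse (ff c th)"
    using DERIV_chain2[OF DERIV_sin th_deriv[OF assms x]] th_def by simp
  moreover have "cos th * inverse (ff c th) = WW c a x"
    using cth wpos unfolding ws ff_def by (simp add: field_simps)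
  ultimately have "DERIV (\<lambda>t. sin (PP c (t + a))) x :> WW c a x" by simp
  then show "DERIV (\<lambda>t. sin (incl (WW c a) t)) x :> WW c a x"
    by (rule has_field_derivative_transform_within_open[OF _ JJ_open x]) (simp add: incl_WW[OF assms])
  have "DERIV (\<lambda>t. tan (PP c (t + a))) x :> inverse ((cos th)\<^sup>2) * inverse (ff c th)"
    using DERIV_chain2[OF DERIV_tan th_deriv[OF assms x]] th_def cth by simp
  then have dd: "DERIV (deriv (WW c a)) x :> inverse ((cos th)\<^sup>2) * inverse (ff c th)"
    by (rule has_field_derivative_transform_within_open[OF _ JJ_open x]) (simp add: deriv_WW[OF assms])
  then show "deriv (WW c a) differentiable at x"
    using real_differentiable_def by blast
next
  have "continuous_on (JJ c a) (\<lambda>x. inverse ((cos (PP c (x + a)))\<^sup>2) * inverse (ff c (PP c (x + a))))"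
  proof (intro continuous_at_imp_continuous_on ballI)
    fix x assume x: "x \<in> JJ c a"
    define th where "th = PP c (x + a)"
    have th: "- (pi/2) < th" "th < pi/2" using th_props[OF assms x] th_def by auto
    have cth: "cos th > 0" using th cos_gt_zero_pi by auto
    have fth: "ff c th > 0" using ff_pos[OF assms th] .
    have c2: "isCont (\<lambda>p. inverse ((cos p)\<^sup>2) * inverse (ff c p)) (PP c (x + a))"
    proof -
      have "isCont (ff c) th" using ff_cont[OF assms, of UNIV] by (simp add: continuous_on_eq_continuous_at)
      then show ?thesis using cth fth unfolding th_def by (intro continuous_intros) auto
    qed
    have c1: "isCont (\<lambda>x. PP c (x + a)) x" using DERIV_isCont[OF th_deriv[OF assms x]] .
    show "isCont (\<lambda>x. inverse ((cos (PP c (x + a)))\<^sup>2) * inverse (ff c (PP c (x + a)))) x"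
      using isCont_o2[OF c1 c2] by simp
  qed
  then show "continuous_on (JJ c a) (deriv (deriv (WW c a)))"
  proof (rule continuous_on_eq)
    fix x assume x: "x \<in> JJ c a"
    define th where "th = PP c (x + a)"
    have th: "- (pi/2) < th" "th < pi/2" using th_props[OF assms x] th_def by auto
    have cth: "cos th > 0" using th cos_gt_zero_pi by auto
    have "DERIV (\<lambda>t. tan (PP c (t + a))) x :> inverse ((cos th)\<^sup>2) * inverse (ff c th)"
      using DERIV_chain2[OF DERIV_tan th_deriv[OF assms x]] th_def cth by simp
    then have "DERIV (deriv (WW c a)) x :> inverse ((cos th)\<^sup>2) * inverse (ff c th)"
      by (rule has_field_derivative_transform_within_open[OF _ JJ_open x]) (simp add: deriv_WW[OF assms])
    then show "inverse ((cos (PP c (x + a)))\<^sup>2) * inverse (ff c (PP c (x + a))) = deriv (deriv (WW c a)) x"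
      using DERIV_imp_deriv th_def by metis
  qed
qed



lemma incl_bounds: "- (pi/2) < incl U x" "incl U x < pi/2"
  unfolding incl_def using arctan_lbound arctan_ubound by auto

lemma U_sq: assumes "cap_energy U I c" "x \<in> I" shows "(U x)\<^sup>2 = 2 * (c - cos (incl U x))"
proof -
  have "(U x)\<^sup>2 / 2 + cos (incl U x) = c" using assms unfolding cap_energy_def by blast
  then show ?thesis by (simp add: field_simps)
qed

lemma U_nz: assumes "cap_energy U I c" "c > 1" "x \<in> I" shows "U x \<noteq> 0"
proof
  assume "U x = 0"
  then have "2 * (c - cos (incl U x)) = 0" using U_sq[OF assms(1,3)] by simp
  then show False using cpos[OF assms(2), of "incl U x"] by simp
qed

lemma U_cont: assumes "cap_sol U I" shows "continuous_on I U"
  using assms unfolding cap_sol_def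
  by (intro continuous_at_imp_continuous_on ballI) (meson DERIV_isCont)

lemma sign_const: assumes "cap_sol U I" "cap_energy U I c" "c > 1"
  shows "(\<forall>x\<in>I. U x > 0) \<or> (\<forall>x\<in>I. U x < 0)"
proof (rule ccontr)
  assume "\<not> ?thesis"
  then obtain x1 y1 where "x1 \<in> I" "\<not> U x1 > 0" "y1 \<in> I" "\<not> U y1 < 0" by blast
  moreover then have "U x1 \<noteq> 0" "U y1 \<noteq> 0" using U_nz[OF assms(2,3)] by auto
  ultimately obtain x y where xy: "x \<in> I" "y \<in> I" "U x > 0" "U y < 0"
    by (metis linorder_neqE_linordered_idom)
  have iv: "is_interval I" using assms(1) unfolding cap_sol_def by auto
  have ct: "continuous_on I U" using U_cont[OF assms(1)] .
  have sub: "{min x y..max x y} \<subseteq> I"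
  proof
    fix z assume "z \<in> {min x y..max x y}"
    then have z: "min x y \<le> z" "z \<le> max x y" by auto
    have H: "\<And>a b z. a\<in>I \<Longrightarrow> b\<in>I \<Longrightarrow> a \<le> z \<Longrightarrow> z \<le> b \<Longrightarrow> z \<in> I"
      using iv unfolding is_interval_1 by blast
    show "z \<in> I"
    proof (cases "x \<le> y")
      case True then show ?thesis using H[of x y z] z xy by (simp add: min_def max_def)
    next
      case False then show ?thesis using H[of y x z] z xy by (simp add: min_def max_def)
    qed
  qed
  have "\<exists>z. min x y \<le> z \<and> z \<le> max x y \<and> U z = 0"
  proof (cases "x \<le> y")
    case True
    have "continuous_on {x..y} U" using continuous_on_subset[OF ct sub] True by (simp add: min_def max_def)
    then obtain z where "x \<le> z" "z \<le> y" "U z = 0" using IVT2'[where f=U and a=x and b=y and y=0] xy True by force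
    then show ?thesis using True by (intro exI[of _ z]) (simp add: min_def max_def)
  next
    case False
    have "continuous_on {y..x} U" using continuous_on_subset[OF ct sub] False by (simp add: min_def max_def)
    then obtain z where "y \<le> z" "z \<le> x" "U z = 0" using IVT'[where f=U and a=y and b=x and y=0] xy False by force
    then show ?thesis using False by (intro exI[of _ z]) (simp add: min_def max_def)
  qed
  then obtain z where "z \<in> {min x y..max x y}" "U z = 0" by auto
  then show False using U_nz[OF assms(2,3)] sub by auto
qed

lemma rep: assumes sol: "cap_sol U I" and en: "cap_energy U I c" and c: "c > 1"
  and s: "s = 1 \<or> s = -1" and sp: "\<forall>x\<in>I. s * U x > 0"
  shows "\<exists>a. \<forall>x\<in>I. AA c < s * x + a \<and> s * x + a < BB c \<and> incl U x = PP c (s * x + a)"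
proof -
  define g where "g t = XX c (incl U t) - s * t" for t
  have "\<forall>x\<in>I. (g has_field_derivative 0) (at x within I)"
  proof
    fix x assume x: "x \<in> I"
    obtain D where D: "DERIV (deriv U) x :> D"
      using sol x unfolding cap_sol_def real_differentiable_def by blast
    define p' where "p' = inverse (1 + (deriv U x)\<^sup>2) * D"
    have dp: "DERIV (incl U) x :> p'"
      unfolding incl_def[abs_def] p'_def by (rule DERIV_chain2[OF DERIV_arctan D])
    have "DERIV (\<lambda>t. sin (incl U t)) x :> cos (incl U x) * p'"
      by (rule DERIV_chain2[OF DERIV_sin dp])
    moreover have "DERIV (\<lambda>t. sin (incl U t)) x :> U x" using sol x unfolding cap_sol_def by blast
    ultimately have e1: "cos (incl U x) * p' = U x" by (rule DERIV_unique)
    have "DERIV (\<lambda>t. XX c (incl U t)) x :> ff c (incl U x) * p'"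
      by (rule DERIV_chain2[OF XX_deriv[OF c] dp]) (use incl_bounds[of U x] pi_half_gt in linarith)
    then have dg: "DERIV g x :> ff c (incl U x) * p' - s * 1"
      unfolding g_def by (intro DERIV_diff DERIV_cmult DERIV_ident)
    have "sqrt (2 * (c - cos (incl U x))) = \<bar>U x\<bar>" using U_sq[OF en x] by (metis real_sqrt_abs)
    moreover have "ff c (incl U x) * p' = (cos (incl U x) * p') / sqrt (2 * (c - cos (incl U x)))"
      unfolding ff_def by simp
    ultimately have "ff c (incl U x) * p' = U x / \<bar>U x\<bar>" using e1 by simp
    also have "\<dots> = s"
    proof -
      have "s * U x > 0" using sp x by blast
      then show ?thesis using s by (elim disjE) auto
    qed
    finally have "DERIV g x :> 0" using dg by simp
    then show "(g has_field_derivative 0) (at x within I)" by (rule has_field_derivative_at_within)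
  qed
  moreover have "convex I" using sol unfolding cap_sol_def by (simp add: is_interval_convex)
  ultimately obtain a where a: "\<forall>x\<in>I. g x = a" using has_field_derivative_zero_constant by blast
  show ?thesis
  proof (intro exI ballI conjI)
    fix x assume x: "x \<in> I"
    have e: "XX c (incl U x) = s * x + a" using a x g_def by auto
    show "AA c < s * x + a" "s * x + a < BB c" "incl U x = PP c (s * x + a)"
      using PP_XX[OF c incl_bounds[of U x]] e by auto
  qed
qed



lemma len_bound: assumes c: "c > 1" shows "BB c - AA c < sqrt (2 / (c - 1))"
proof -
  define k where "k = sqrt (2 * (c - 1))"
  have kpos: "k > 0" using c k_def by simp
  define h where "h t = sin t / k - XX c t" for t
  have dh: "DERIV h t :> cos t / k - ff c t" if "t > -2" for t
    unfolding h_def[abs_def] by (intro DERIV_diff DERIV_cdivide DERIV_sin XX_deriv c that)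
  have ch: "continuous_on {a..b} h" if "a > -2" for a b
    unfolding h_def[abs_def] using that kpos
    by (intro continuous_at_imp_continuous_on ballI continuous_intros XX_cont c) auto
  have ffle: "ff c t \<le> cos t / k" if "- (pi/2) \<le> t" "t \<le> pi/2" for t
  proof -
    have "cos t \<ge> 0" using that cos_ge_zero by auto
    moreover have kl: "k \<le> sqrt (2 * (c - cos t))" unfolding k_def using cos_le_one[of t] by simp
    moreover have "0 < sqrt (2 * (c - cos t)) * k" using kl kpos by (intro mult_pos_pos) linarith+
    ultimately show ?thesis unfolding ff_def using kpos by (intro divide_left_mono) (auto simp: mult.commute)
  qed
  have fflt: "ff c t < cos t / k" if "0 < t" "t < pi/2" for t
  proof -
    have "cos t > 0" using that cos_gt_zero_pi by auto
    moreover have "cos t < 1" using cos_monotone_0_pi[of 0 t] that by simp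
    then have kl: "k < sqrt (2 * (c - cos t))" unfolding k_def by simp
    moreover have "0 < sqrt (2 * (c - cos t)) * k" using kl kpos by (intro mult_pos_pos) linarith+
    ultimately show ?thesis unfolding ff_def using kpos by (intro divide_strict_left_mono) (auto simp: mult.commute)
  qed
  have h1: "h (-(pi/2)) \<le> h 0"
  proof (rule DERIV_nonneg_imp_increasing_open[of "-(pi/2)" 0 h])
    show "- (pi / 2) \<le> 0" by simp
    show "continuous_on {- (pi / 2)..0} h" using ch pi_half_gt by blast
    fix x assume x: "- (pi / 2) < x" "x < 0"
    show "\<exists>y. DERIV h x :> y \<and> 0 \<le> y"
      using dh[of x] ffle[of x] x pi_half_gt by (intro exI[of _ "cos x / k - ff c x"]) auto
  qed
  have h2: "h 0 < h (pi/2)"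
  proof (rule DERIV_pos_imp_increasing_open[of 0 "pi/2" h])
    show "0 < pi/2" by simp
    show "continuous_on {0..pi/2} h" using ch by simp
    fix x assume x: "0 < x" "x < pi/2"
    show "\<exists>y. DERIV h x :> y \<and> 0 < y"
      using dh[of x] fflt[of x] x by (intro exI[of _ "cos x / k - ff c x"]) auto
  qed
  have "- 1 / k - AA c < 1 / k - BB c" using h1 h2 unfolding h_def by simp
  then have "BB c - AA c < 2 / k" by (simp add: field_simps)
  moreover have "sqrt (2 / (c - 1)) = 2 / k"
  proof -
    have "k\<^sup>2 = 2 * (c - 1)" unfolding k_def using c by simp
    then have "2 / (c - 1) = (2 / k)\<^sup>2" using c kpos by (simp add: power_divide field_simps)
    then show ?thesis using kpos by simp
  qed
  ultimately show ?thesis by simp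
qed

lemma part1: assumes sol: "cap_sol U I" and en: "cap_energy U I c" and c: "c > 1"
  shows "bounded I \<and> Sup I - Inf I < sqrt (2 / (c - 1))"
proof -
  obtain s where s: "s = 1 \<or> s = -1" "\<forall>x\<in>I. s * U x > 0"
    using sign_const[OF sol en c] by (metis mult_1 mult_minus1 neg_0_less_iff_less)
  obtain a where a: "\<forall>x\<in>I. AA c < s * x + a \<and> s * x + a < BB c"
    using rep[OF sol en c s] by blast
  define L where "L = BB c - AA c"
  have d: "\<bar>x - y\<bar> < L" if "x \<in> I" "y \<in> I" for x y
  proof -
    have "AA c < s * x + a" "s * x + a < BB c" "AA c < s * y + a" "s * y + a < BB c" using a that by auto
    then have "\<bar>(s * x + a) - (s * y + a)\<bar> < L" unfolding L_def by (simp add: abs_less_iff)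
    moreover have "\<bar>(s * x + a) - (s * y + a)\<bar> = \<bar>x - y\<bar>" using s(1) by (auto simp: abs_minus_commute)
    ultimately show ?thesis by simp
  qed
  have ne: "I \<noteq> {}" using sol unfolding cap_sol_def by auto
  then obtain x0 where x0: "x0 \<in> I" by auto
  have "bounded I" unfolding bounded_real
  proof (intro exI[of _ "\<bar>x0\<bar> + L"] ballI)
    fix x assume "x \<in> I"
    then have "\<bar>x - x0\<bar> < L" using d x0 by blast
    then show "\<bar>x\<bar> \<le> \<bar>x0\<bar> + L" by arith
  qed
  have lb: "x - L \<le> Inf I" if "x \<in> I" for x
  proof (rule cInf_greatest[OF ne])
    fix y assume "y \<in> I" then have "\<bar>x - y\<bar> < L" using d that by blast
    then show "x - L \<le> y" by arith
  qed
  have "Sup I \<le> Inf I + L"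
    using ne lb by (intro cSup_least) (auto simp: algebra_simps)
  then show ?thesis using \<open>bounded I\<close> len_bound[OF c] unfolding L_def by simp
qed



lemma WW_eq: assumes en: "cap_energy U I c" and x: "x \<in> I" and pos: "U x > 0"
  and e: "incl U x = PP c (x + a)" shows "WW c a x = U x"
proof -
  have "WW c a x = sqrt ((U x)\<^sup>2)" unfolding WW_def using U_sq[OF en x] e by simp
  then show ?thesis using pos by simp
qed

lemma in_JJ: "AA c < x + a \<Longrightarrow> x + a < BB c \<Longrightarrow> x \<in> JJ c a"
  unfolding JJ_def by auto

lemma WW_ge: assumes c: "c > 1" "x \<in> JJ c a" shows "sqrt (2 * (c - 1)) \<le> WW c a x"
  unfolding WW_def using cos_le_one[of "PP c (x + a)"] by simp

lemma cos_lt1: assumes "- (pi/2) < t" "t < pi/2" "t \<noteq> 0" shows "cos t < 1"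
proof -
  have "cos \<bar>t\<bar> < cos 0" using assms by (intro cos_monotone_0_pi) auto
  moreover have "cos \<bar>t\<bar> = cos t" by (cases "t < 0") auto
  ultimately show ?thesis by simp
qed

lemma part2: assumes sol: "cap_sol U I" and en: "cap_energy U I c" and c: "c > 1"
  and ex: "\<exists>x\<in>I. U x > 0"
  shows "\<exists>V J. cap_ext U I V J \<and> cap_energy V J c \<and>
               (\<exists>!m. m \<in> J \<and> (\<forall>x\<in>J. V m \<le> V x)) \<and>
               (\<forall>m\<in>J. (\<forall>x\<in>J. V m \<le> V x) \<longrightarrow> V m > 0)"
proof -
  have pos: "\<forall>x\<in>I. U x > 0" using sign_const[OF sol en c] ex by force
  obtain a where a: "\<forall>x\<in>I. AA c < 1 * x + a \<and> 1 * x + a < BB c \<and> incl U x = PP c (1 * x + a)"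
    using rep[OF sol en c, of 1] pos by auto
  have ext: "cap_ext U I (WW c a) (JJ c a)"
    unfolding cap_ext_def
  proof (intro conjI ballI subsetI)
    show "cap_sol (WW c a) (JJ c a)" using WW_sol[OF c] .
    fix x assume x: "x \<in> I"
    show "x \<in> JJ c a" using a x by (intro in_JJ) auto
    show "WW c a x = U x" using a x pos by (intro WW_eq[OF en x]) auto
  qed
  define m where "m = XX c 0 - a"
  have m0: "AA c < XX c 0" "XX c 0 < BB c" "PP c (XX c 0) = 0" using PP_XX[OF c, of 0] by auto
  have mJ: "m \<in> JJ c a" using m0 by (intro in_JJ) (auto simp: m_def)
  have Wm: "WW c a m = sqrt (2 * (c - 1))" unfolding WW_def m_def using m0 by simp
  have uniq: "m' = m" if m': "m' \<in> JJ c a" "\<forall>x\<in>JJ c a. WW c a m' \<le> WW c a x" for m'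
  proof -
    have th: "- (pi/2) < PP c (m' + a)" "PP c (m' + a) < pi/2" "XX c (PP c (m' + a)) = m' + a"
      using th_props[OF c m'(1)] by auto
    have "WW c a m' \<le> sqrt (2 * (c - 1))" using m' mJ Wm by metis
    then have "cos (PP c (m' + a)) \<ge> 1" unfolding WW_def by simp
    then have "PP c (m' + a) = 0" using cos_lt1[OF th(1,2)] by force
    then show ?thesis using th(3) by (simp add: m_def)
  qed
  show ?thesis
  proof (intro exI conjI)
    show "cap_ext U I (WW c a) (JJ c a)" by (rule ext)
    show "cap_energy (WW c a) (JJ c a) c" by (rule WW_energy[OF c])
    show "\<exists>!m. m \<in> JJ c a \<and> (\<forall>x\<in>JJ c a. WW c a m \<le> WW c a x)"
    proof (rule ex1I[of _ m])
      show "m \<in> JJ c a \<and> (\<forall>x\<in>JJ c a. WW c a m \<le> WW c a x)" using mJ Wm WW_ge[OF c] by auto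
      fix m' assume "m' \<in> JJ c a \<and> (\<forall>x\<in>JJ c a. WW c a m' \<le> WW c a x)"
      then show "m' = m" using uniq by blast
    qed
    show "\<forall>m\<in>JJ c a. (\<forall>x\<in>JJ c a. WW c a m \<le> WW c a x) \<longrightarrow> 0 < WW c a m"
      using cpos[OF c] unfolding WW_def by simp
  qed
qed



lemma norm_form: assumes mx: "cap_maximal V J" and en: "cap_energy V J c" and c: "c > 1"
  and pos: "\<forall>x\<in>J. V x > 0" and z: "0 \<in> J" and mn: "\<forall>x\<in>J. V 0 \<le> V x"
  shows "J = JJ c (XX c 0) \<and> (\<forall>x\<in>J. V x = WW c (XX c 0) x)"
proof -
  have sol: "cap_sol V J" using mx unfolding cap_maximal_def by auto
  obtain a where a: "\<forall>x\<in>J. AA c < 1 * x + a \<and> 1 * x + a < BB c \<and> incl V x = PP c (1 * x + a)"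
    using rep[OF sol en c, of 1] pos by auto
  have dV: "DERIV V 0 :> tan (incl V 0)" using sol z unfolding cap_sol_def by blast
  obtain d where d: "d > 0" "\<forall>y. dist y 0 < d \<longrightarrow> y \<in> J"
    using sol z unfolding cap_sol_def open_dist by blast
  have "tan (incl V 0) = 0"
    by (rule DERIV_local_min[OF dV d(1)]) (use d mn in \<open>auto simp: dist_real_def\<close>)
  then have "deriv V 0 = 0" using DERIV_imp_deriv[OF dV] by simp
  then have "incl V 0 = 0" unfolding incl_def by simp
  then have P0: "PP c a = 0" and Aa: "AA c < a" "a < BB c" using a z by auto
  have aeq: "a = XX c 0" using PP_ex[OF c Aa] P0 by simp
  have ext: "cap_ext V J (WW c a) (JJ c a)"
    unfolding cap_ext_def
  proof (intro conjI ballI subsetI)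
    show "cap_sol (WW c a) (JJ c a)" using WW_sol[OF c] .
    fix x assume x: "x \<in> J"
    show "x \<in> JJ c a" using a x by (intro in_JJ) auto
    show "WW c a x = V x" using a x pos by (intro WW_eq[OF en x]) auto
  qed
  then have "JJ c a = J" using mx unfolding cap_maximal_def by blast
  then show ?thesis using ext aeq unfolding cap_ext_def by auto
qed

lemma ff_mono_c: assumes "c1 > 1" "c1 < c2" "- (pi/2) < t" "t < pi/2" shows "ff c2 t \<le> ff c1 t"
proof -
  have "cos t \<ge> 0" using assms cos_ge_zero by auto
  moreover have kl: "sqrt (2 * (c1 - cos t)) \<le> sqrt (2 * (c2 - cos t))" using assms by simp
  moreover have "0 < sqrt (2 * (c1 - cos t))" using cpos[OF assms(1), of t] by simp
  moreover then have "0 < sqrt (2 * (c1 - cos t)) * sqrt (2 * (c2 - cos t))" using kl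
    by (intro mult_pos_pos) linarith+
  ultimately show ?thesis unfolding ff_def by (intro divide_left_mono) (auto simp: mult.commute)
qed

lemma comp: assumes c1: "c1 > 1" and c12: "c1 < c2" and t: "- (pi/2) < t" "t < pi/2"
  shows "0 \<le> t \<Longrightarrow> XX c2 t - XX c2 0 \<le> XX c1 t - XX c1 0"
    and "t \<le> 0 \<Longrightarrow> XX c1 t - XX c1 0 \<le> XX c2 t - XX c2 0"
proof -
  have c2: "c2 > 1" using c1 c12 by simp
  define k where "k u = XX c1 u - XX c2 u" for u
  have mono: "k u \<le> k v" if "- (pi/2) < u" "u \<le> v" "v < pi/2" for u v
  proof (rule DERIV_nonneg_imp_increasing_open[of u v k])
    show "u \<le> v" by fact
    show "continuous_on {u..v} k" unfolding k_def[abs_def] using that pi_half_gt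
      by (intro continuous_at_imp_continuous_on ballI continuous_intros XX_cont c1 c2) auto
    fix x assume x: "u < x" "x < v"
    have "DERIV k x :> ff c1 x - ff c2 x" unfolding k_def[abs_def]
      using x that pi_half_gt by (intro DERIV_diff XX_deriv c1 c2) auto
    moreover have "ff c2 x \<le> ff c1 x" using x that by (intro ff_mono_c c1 c12) auto
    ultimately show "\<exists>y. DERIV k x :> y \<and> 0 \<le> y" by (intro exI[of _ "ff c1 x - ff c2 x"]) auto
  qed
  show "0 \<le> t \<Longrightarrow> XX c2 t - XX c2 0 \<le> XX c1 t - XX c1 0" using mono[of 0 t] t unfolding k_def by auto
  show "t \<le> 0 \<Longrightarrow> XX c1 t - XX c1 0 \<le> XX c2 t - XX c2 0" using mono[of t 0] t unfolding k_def by auto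
qed

lemma noint: assumes c1: "c1 > 1" and c12: "c1 < c2"
  and p1: "(x, y) \<in> graph_on (WW c1 (XX c1 0)) (JJ c1 (XX c1 0))"
  and p2: "(x, y) \<in> graph_on (WW c2 (XX c2 0)) (JJ c2 (XX c2 0))"
  shows False
proof -
  have c2: "c2 > 1" using c1 c12 by simp
  have x1: "x \<in> JJ c1 (XX c1 0)" and y1: "y = WW c1 (XX c1 0) x" using p1 unfolding graph_on_def by auto
  have x2: "x \<in> JJ c2 (XX c2 0)" and y2: "y = WW c2 (XX c2 0) x" using p2 unfolding graph_on_def by auto
  define t1 where "t1 = PP c1 (x + XX c1 0)"
  define t2 where "t2 = PP c2 (x + XX c2 0)"
  have t1: "- (pi/2) < t1" "t1 < pi/2" "XX c1 t1 - XX c1 0 = x" using th_props[OF c1 x1] t1_def by auto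
  have t2: "- (pi/2) < t2" "t2 < pi/2" "XX c2 t2 - XX c2 0 = x" using th_props[OF c2 x2] t2_def by auto
  have "sqrt (2 * (c1 - cos t1)) = sqrt (2 * (c2 - cos t2))" using y1 y2 unfolding WW_def t1_def t2_def by simp
  then have "c1 - cos t1 = c2 - cos t2" by simp
  then have cc: "cos t1 < cos t2" using c12 by simp
  show False
  proof (cases "0 \<le> t1")
    case True
    have "0 \<le> x" using XX_mono_le[OF c1, of 0 t1] True t1 by simp
    have "0 \<le> t2"
    proof (rule ccontr)
      assume "\<not> 0 \<le> t2"
      then have "XX c2 t2 < XX c2 0" using XX_mono[OF c2, of t2 0] t2 by simp
      then show False using t2(3) \<open>0 \<le> x\<close> by simp
    qed
    have "t2 < t1" using cc cos_mono_less_eq[of t1 t2] True \<open>0 \<le> t2\<close> t1 t2 by simp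
    then have "XX c1 t2 < XX c1 t1" using XX_mono[OF c1, of t2 t1] t1 t2 by simp
    moreover have "XX c2 t2 - XX c2 0 \<le> XX c1 t2 - XX c1 0" using comp(1)[OF c1 c12 t2(1,2) \<open>0 \<le> t2\<close>] .
    ultimately show False using t1(3) t2(3) by simp
  next
    case False
    have "x < 0" using XX_mono[OF c1, of t1 0] False t1 by simp
    have "t2 < 0"
    proof (rule ccontr)
      assume "\<not> t2 < 0"
      then have "XX c2 0 \<le> XX c2 t2" using XX_mono_le[OF c2, of 0 t2] t2 by simp
      then show False using t2(3) \<open>x < 0\<close> by simp
    qed
    have "cos (- t1) < cos (- t2)" using cc by simp
    then have "t1 < t2" using cos_mono_less_eq[of "-t1" "-t2"] False \<open>t2 < 0\<close> t1 t2 by simp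
    then have "XX c1 t1 < XX c1 t2" using XX_mono[OF c1, of t1 t2] t1 t2 by simp
    moreover have "XX c1 t2 - XX c1 0 \<le> XX c2 t2 - XX c2 0" using comp(2)[OF c1 c12 t2(1,2)] \<open>t2 < 0\<close> by simp
    ultimately show False using t1(3) t2(3) by simp
  qed
qed

lemma normalized_canon: assumes "G \<in> normalized_curves"
  obtains c where "c > 1" "G = graph_on (WW c (XX c 0)) (JJ c (XX c 0))"
proof -
  obtain V J c where G: "G = graph_on V J" and c: "c > 1" "cap_maximal V J" "cap_energy V J c"
    "\<forall>x\<in>J. V x > 0" "0 \<in> J" "\<forall>x\<in>J. V 0 \<le> V x"
    using assms unfolding normalized_curves_def by blast
  have nf: "J = JJ c (XX c 0) \<and> (\<forall>x\<in>J. V x = WW c (XX c 0) x)" using norm_form[OF c(2,3,1,4,5,6)] .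
  have "G = graph_on (WW c (XX c 0)) (JJ c (XX c 0))"
    unfolding G graph_on_def using nf by force
  then show ?thesis using that c(1) by blast
qed

lemma part3: assumes "p \<in> D_plus" shows "\<exists>!G. G \<in> normalized_curves \<and> p \<in> G"
proof -
  obtain G where G: "G \<in> normalized_curves" "p \<in> G" using assms unfolding D_plus_def by blast
  show ?thesis
  proof (rule ex1I[of _ G])
    show "G \<in> normalized_curves \<and> p \<in> G" using G by blast
    fix G' assume G': "G' \<in> normalized_curves \<and> p \<in> G'"
    obtain c where c: "c > 1" "G = graph_on (WW c (XX c 0)) (JJ c (XX c 0))"
      using normalized_canon[OF G(1)] by blast
    obtain c' where c': "c' > 1" "G' = graph_on (WW c' (XX c' 0)) (JJ c' (XX c' 0))"
      using normalized_canon G' by blast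
    obtain x y where p: "p = (x, y)" by fastforce
    consider "c = c'" | "c < c'" | "c' < c" by linarith
    then show "G' = G"
    proof cases
      case 1 then show ?thesis using c c' by simp
    next
      case 2 then show ?thesis using noint[OF c(1) 2, of x y] c c' G G' p by auto
    next
      case 3 then show ?thesis using noint[OF c'(1) 3, of x y] c c' G G' p by auto
    qed
  qed
qed


theorem theorem1:
  shows "(\<forall>U I c. cap_sol U I \<and> cap_energy U I c \<and> c > 1 \<longrightarrow>
            bounded I \<and> Sup I - Inf I < sqrt (2 / (c - 1)))
       \<and> (\<forall>U I c. cap_sol U I \<and> cap_energy U I c \<and> c > 1 \<and> (\<exists>x\<in>I. U x > 0) \<longrightarrow>
            (\<exists>V J. cap_ext U I V J \<and> cap_energy V J c \<and>
               (\<exists>!m. m \<in> J \<and> (\<forall>x\<in>J. V m \<le> V x)) \<and>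
               (\<forall>m\<in>J. (\<forall>x\<in>J. V m \<le> V x) \<longrightarrow> V m > 0)))
       \<and> (\<forall>p\<in>D_plus. \<exists>!G. G \<in> normalized_curves \<and> p \<in> G)"
  using part1 part2 part3 by blast

end
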